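(* Let $\epsilon\in]0,1[$. The set $N_0(\epsilon)$ is empty. Let $n\geqslant1$. The set $N_n(\epsilon)=\mathcal{P}^-_{0_n}(\square[n],\epsilon)$, equipped with the compact-open topology, is $\Delta$-generated, $\Delta$-Hausdorff, metrizable, contractible, compact and sequentially compact.
   Context: A natural directed path of $[0,1]^n$ is a continuous map $\gamma=(\gamma_1,\dots,\gamma_n):[0,\ell]\to[0,1]^n$ with each $\gamma_i$ non-decreasing, $\gamma(0)=0_n=(0,\dots,0)$ and $\gamma_1(t)+\dots+\gamma_n(t)=t$ for all $t\in[0,\ell]$. For $\epsilon\in]0,1[$, $N_n(\epsilon)$ is the set of natural directed paths $[0,\epsilon]\to[0,1]^n$ (for $n=0$, $[0,1]^0$ is a point). $\mathcal{P}^-_{0_n}(\square[n],\epsilon)$ denotes the set of paths $|c|_{geom}\phi$ with $c$ a cube of dimension $\geqslant1$ of the standard precubical $n$-cube $\square[n]$ with initial vertex $0_n$ and $\phi$ a natural directed path of length $\epsilon$ in $[0,1]^{\dim c}$; it coincides with $N_n(\epsilon)$. Compact means Hausdorff and quasi-compact. $\Delta$-generated spaces are those whose topology is final for the maps from topological simplices; $\Delta$-Hausdorff is the corresponding separation property (images of maps from simplices are closed). *)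

theory Defs
  imports "HOL-Analysis.Analysis" "HOL-Homology.Simplices"
begin

text \<open>The cube [0,1]^n, points are extensional functions on {..<n} (so [0,1]^0 is a point).\<close>
definition cube_set :: "nat \<Rightarrow> (nat \<Rightarrow> real) set" where
  "cube_set n = PiE {..<n} (\<lambda>_. {0..1})"

definition cube_top :: "nat \<Rightarrow> (nat \<Rightarrow> real) topology" where
  "cube_top n = subtopology (powertop_real {..<n}) (cube_set n)"

definition natural_dipath :: "nat \<Rightarrow> real \<Rightarrow> (real \<Rightarrow> nat \<Rightarrow> real) \<Rightarrow> bool" where
  "natural_dipath n l \<gamma> \<longleftrightarrow>
     \<gamma> \<in> {0..l} \<rightarrow>\<^sub>E cube_set n \<and>
     continuous_map (top_of_set {0..l}) (cube_top n) \<gamma> \<and>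
     (\<forall>i<n. mono_on {0..l} (\<lambda>t. \<gamma> t i)) \<and>
     \<gamma> 0 = (\<lambda>i\<in>{..<n}. 0) \<and>
     (\<forall>t\<in>{0..l}. (\<Sum>i<n. \<gamma> t i) = t)"

definition N :: "nat \<Rightarrow> real \<Rightarrow> (real \<Rightarrow> nat \<Rightarrow> real) set" where
  "N n \<epsilon> = {\<gamma>. natural_dipath n \<epsilon> \<gamma>}"

definition compact_open :: "'a topology \<Rightarrow> 'b topology \<Rightarrow> ('a \<Rightarrow> 'b) topology" where
  "compact_open X Y = topology_generated_by
     {{f \<in> topspace X \<rightarrow>\<^sub>E topspace Y. continuous_map X Y f \<and> f ` K \<subseteq> U} | K U.
        compactin X K \<and> openin Y U}"

definition simplex_top :: "nat \<Rightarrow> (nat \<Rightarrow> real) topology" where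
  "simplex_top m = subtopology (powertop_real UNIV) (standard_simplex m)"

definition delta_generated :: "'a topology \<Rightarrow> bool" where
  "delta_generated X \<longleftrightarrow>
     (\<forall>U. U \<subseteq> topspace X \<longrightarrow>
        (openin X U \<longleftrightarrow>
          (\<forall>m f. continuous_map (simplex_top m) X f \<longrightarrow>
                 openin (simplex_top m) {x \<in> standard_simplex m. f x \<in> U})))"

definition delta_hausdorff :: "'a topology \<Rightarrow> bool" where
  "delta_hausdorff X \<longleftrightarrow>
     (\<forall>m f. continuous_map (simplex_top m) X f \<longrightarrow> closedin X (f ` standard_simplex m))"

definition sequentially_compact_top :: "'a topology \<Rightarrow> bool" where
  "sequentially_compact_top X \<longleftrightarrow>
     (\<forall>\<sigma>::nat \<Rightarrow> 'a. range \<sigma> \<subseteq> topspace X \<longrightarrow>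
        (\<exists>r x. strict_mono r \<and> x \<in> topspace X \<and> limitin X (\<sigma> \<circ> r) x sequentially))"

end

theory Submission
  imports Defs
begin


lemma topspace_cube_top[simp]: "topspace (cube_top n) = cube_set n"
  unfolding cube_top_def cube_set_def by auto

lemma cube_top_eq: "cube_top n = product_topology (\<lambda>_. top_of_set {0..1}) {..<n}"
  unfolding cube_top_def cube_set_def by (simp add: subtopology_product_topology)

lemma compact_cube_top: "compact_space (cube_top n)"
  unfolding cube_top_eq by (simp add: compact_space_product_topology compact_space_subtopology)

lemma Hausdorff_cube_top: "Hausdorff_space (cube_top n)"
  unfolding cube_top_eq by (simp add: Hausdorff_space_product_topology Hausdorff_space_subtopology)

lemma metrizable_cube_top: "metrizable_space (cube_top n)"
  unfolding cube_top_def
  by (intro metrizable_space_subtopology) (simp add: metrizable_space_product_topology metrizable_space_euclidean)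

lemma cube_proj_cont: "i < n \<Longrightarrow> continuous_map (cube_top n) euclideanreal (\<lambda>y. y i)"
  unfolding cube_top_def
  by (intro continuous_map_from_subtopology continuous_map_product_projection) auto

lemma natural_dipath_iff:
  assumes "0 \<le> e"
  shows "natural_dipath n e \<gamma> \<longleftrightarrow>
     \<gamma> \<in> {0..e} \<rightarrow>\<^sub>E cube_set n \<and>
     (\<forall>i<n. \<forall>s t. 0 \<le> s \<longrightarrow> s \<le> t \<longrightarrow> t \<le> e \<longrightarrow> \<gamma> s i \<le> \<gamma> t i) \<and>
     (\<forall>i<n. \<gamma> 0 i = 0) \<and>
     (\<forall>t\<in>{0..e}. (\<Sum>i<n. \<gamma> t i) = t)" (is "?L \<longleftrightarrow> ?R")
proof
  assume ?L then show ?R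
    unfolding natural_dipath_def mono_on_def by auto
next
  assume R: ?R
  have lip: "\<bar>\<gamma> t i - \<gamma> s i\<bar> \<le> \<bar>t - s\<bar>" if "s \<in> {0..e}" "t \<in> {0..e}" "i < n" for s t i
  proof -
    have *: "\<gamma> b i - \<gamma> a i \<le> b - a" if ab: "a \<in> {0..e}" "b \<in> {0..e}" "a \<le> b" for a b
    proof -
      have "\<gamma> b i - \<gamma> a i \<le> (\<Sum>j<n. \<gamma> b j - \<gamma> a j)"
        using that R \<open>i<n\<close> by (intro member_le_sum) auto
      also have "\<dots> = b - a" using R ab by (simp add: sum_subtractf)
      finally show ?thesis .
    qed
    show ?thesis
    proof (cases "s \<le> t")
      case True then show ?thesis using *[of s t] R that by force
    next
      case False then show ?thesis using *[of t s] R that by force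
    qed
  qed
  have g0: "\<gamma> 0 = (\<lambda>i\<in>{..<n}. 0)"
  proof
    fix i show "\<gamma> 0 i = (\<lambda>i\<in>{..<n}. 0) i"
      using R assms unfolding cube_set_def by (cases "i<n") (auto simp: PiE_def extensional_def)
  qed
  have cont: "continuous_map (top_of_set {0..e}) (cube_top n) \<gamma>"
    unfolding cube_top_def continuous_map_in_subtopology
  proof
    show "continuous_map (top_of_set {0..e}) (powertop_real {..<n}) \<gamma>"
      unfolding continuous_map_componentwise
    proof
      show "\<gamma> ` topspace (top_of_set {0..e}) \<subseteq> extensional {..<n}"
        using R unfolding cube_set_def by (auto simp: PiE_def)
      show "\<forall>k\<in>{..<n}. continuous_map (top_of_set {0..e}) euclideanreal (\<lambda>x. \<gamma> x k)"
      proof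
        fix k assume "k \<in> {..<n}"
        have "1-lipschitz_on {0..e} (\<lambda>x. \<gamma> x k)"
          using lip \<open>k \<in> {..<n}\<close> by (intro lipschitz_onI) (auto simp: dist_real_def)
        then show "continuous_map (top_of_set {0..e}) euclideanreal (\<lambda>x. \<gamma> x k)"
          by (simp add: lipschitz_on_continuous_on)
      qed
    qed
    show "\<gamma> \<in> topspace (top_of_set {0..e}) \<rightarrow> cube_set n" using R by auto
  qed
  show ?L unfolding natural_dipath_def mono_on_def
    using R g0 cont by auto
qed


lemma closedin_all:
  assumes "\<And>j. j \<in> J \<Longrightarrow> closedin X {x \<in> topspace X. P j x}"
  shows "closedin X {x \<in> topspace X. \<forall>j\<in>J. P j x}"
proof (cases "J = {}")
  case True then show ?thesis by simp
next
  case False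
  have "{x \<in> topspace X. \<forall>j\<in>J. P j x} = \<Inter> ((\<lambda>j. {x \<in> topspace X. P j x}) ` J)"
    using False by auto
  then show ?thesis using False assms by (auto intro!: closedin_Inter)
qed

lemma openin_all:
  assumes "finite J" "\<And>j. j \<in> J \<Longrightarrow> openin X {x \<in> topspace X. P j x}"
  shows "openin X {x \<in> topspace X. \<forall>j\<in>J. P j x}"
  using assms
proof (induction J rule: finite_induct)
  case empty then show ?case by simp
next
  case (insert a J)
  have "{x \<in> topspace X. \<forall>j\<in>insert a J. P j x} = {x \<in> topspace X. P a x} \<inter> {x \<in> topspace X. \<forall>j\<in>J. P j x}"
    by auto
  then show ?case using insert by (auto intro!: openin_Int)
qed

definition PT :: "nat \<Rightarrow> real \<Rightarrow> (real \<Rightarrow> nat \<Rightarrow> real) topology" where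
  "PT n e = product_topology (\<lambda>_. cube_top n) {0..e}"

definition Ptop :: "nat \<Rightarrow> real \<Rightarrow> (real \<Rightarrow> nat \<Rightarrow> real) topology" where
  "Ptop n e = subtopology (PT n e) (N n e)"

lemma topspace_PT: "topspace (PT n e) = {0..e} \<rightarrow>\<^sub>E cube_set n"
  unfolding PT_def by simp

lemma N_sub: "N n e \<subseteq> {0..e} \<rightarrow>\<^sub>E cube_set n"
  unfolding N_def natural_dipath_def by auto

lemma topspace_Ptop[simp]: "topspace (Ptop n e) = N n e"
  unfolding Ptop_def using N_sub topspace_PT by auto

lemma eval_cont_PT:
  assumes "t \<in> {0..e}" "i < n"
  shows "continuous_map (PT n e) euclideanreal (\<lambda>f. f t i)"
proof -
  have "continuous_map (PT n e) (cube_top n) (\<lambda>f. f t)"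
    unfolding PT_def using assms by (intro continuous_map_product_projection)
  from continuous_map_compose[OF this cube_proj_cont[OF assms(2)]]
  show ?thesis by (simp add: o_def)
qed

lemma eval_cont:
  assumes "t \<in> {0..e}" "i < n"
  shows "continuous_map (Ptop n e) euclideanreal (\<lambda>f. f t i)"
  unfolding Ptop_def using eval_cont_PT[OF assms] by (rule continuous_map_from_subtopology)

lemma cont_into_Ptop:
  assumes "\<And>x. x \<in> topspace X \<Longrightarrow> f x \<in> N n e"
    and "\<And>t i. t \<in> {0..e} \<Longrightarrow> i < n \<Longrightarrow> continuous_map X euclideanreal (\<lambda>x. f x t i)"
  shows "continuous_map X (Ptop n e) f"
  unfolding Ptop_def continuous_map_in_subtopology
proof
  have ext: "f x \<in> {0..e} \<rightarrow>\<^sub>E cube_set n" if "x \<in> topspace X" for x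
    using assms(1)[OF that] N_sub by blast
  show "continuous_map X (PT n e) f"
    unfolding PT_def continuous_map_componentwise
  proof
    show "f ` topspace X \<subseteq> extensional {0..e}" using ext unfolding PiE_iff by blast
    show "\<forall>k\<in>{0..e}. continuous_map X (cube_top n) (\<lambda>x. f x k)"
    proof
      fix k :: real assume k: "k \<in> {0..e}"
      show "continuous_map X (cube_top n) (\<lambda>x. f x k)"
        unfolding cube_top_def continuous_map_in_subtopology continuous_map_componentwise
      proof (intro conjI)
        show "(\<lambda>x. f x k) ` topspace X \<subseteq> extensional {..<n}"
          using ext k unfolding cube_set_def by (force simp: PiE_def)
        show "\<forall>ka\<in>{..<n}. continuous_map X euclideanreal (\<lambda>x. f x k ka)"
          using assms(2) k by auto
        show "(\<lambda>x. f x k) \<in> topspace X \<rightarrow> cube_set n" using ext k by (force simp: PiE_iff)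
      qed
    qed
  qed
  show "f \<in> topspace X \<rightarrow> N n e" using assms(1) by auto
qed

lemma N_eq:
  assumes "0 \<le> e"
  shows "N n e = {f \<in> topspace (PT n e).
     (\<forall>(s,t,i)\<in>{(s,t,i). 0 \<le> s \<and> s \<le> t \<and> t \<le> e \<and> i < n}. f s i \<le> f t i) \<and>
     (\<forall>i\<in>{..<n}. f 0 i = 0) \<and>
     (\<forall>t\<in>{0..e}. (\<Sum>i<n. f t i) = t)}"
  unfolding N_def topspace_PT natural_dipath_iff[OF assms] by fastforce

lemma closedin_N:
  assumes "0 \<le> e"
  shows "closedin (PT n e) (N n e)"
proof -
  have c1: "closedin (PT n e) {f \<in> topspace (PT n e).
     \<forall>(s,t,i)\<in>{(s,t,i). 0 \<le> s \<and> s \<le> t \<and> t \<le> e \<and> i < n}. f s i \<le> f t i}"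
  proof (rule closedin_all)
    fix j :: "real \<times> real \<times> nat" assume j: "j \<in> {(s,t,i). 0 \<le> s \<and> s \<le> t \<and> t \<le> e \<and> i < n}"
    obtain s t i where sti: "j = (s,t,i)" by (cases j) auto
    have "continuous_map (PT n e) euclideanreal (\<lambda>f. f t i - f s i)"
      using j sti by (auto intro!: continuous_map_diff eval_cont_PT)
    from closedin_continuous_map_preimage[OF this, of "{0..}"]
    show "closedin (PT n e) {f \<in> topspace (PT n e). case j of (s,t,i) \<Rightarrow> f s i \<le> f t i}"
      by (simp add: closed_closedin[symmetric] sti)
  qed
  have c2: "closedin (PT n e) {f \<in> topspace (PT n e). \<forall>i\<in>{..<n}. f 0 i = 0}"
  proof (rule closedin_all)
    fix i assume "i \<in> {..<n}"
    then have "continuous_map (PT n e) euclideanreal (\<lambda>f. f 0 i)"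
      using assms by (auto intro!: eval_cont_PT)
    from closedin_continuous_map_preimage[OF this, of "{0}"]
    show "closedin (PT n e) {f \<in> topspace (PT n e). f 0 i = 0}"
      by (simp add: closed_closedin[symmetric])
  qed
  have c3: "closedin (PT n e) {f \<in> topspace (PT n e). \<forall>t\<in>{0..e}. (\<Sum>i<n. f t i) = t}"
  proof (rule closedin_all)
    fix t assume t: "t \<in> {0..e}"
    then have "continuous_map (PT n e) euclideanreal (\<lambda>f. \<Sum>i<n. f t i)"
      by (auto intro!: continuous_map_sum eval_cont_PT)
    from closedin_continuous_map_preimage[OF this, of "{t}"]
    show "closedin (PT n e) {f \<in> topspace (PT n e). (\<Sum>i<n. f t i) = t}"
      by (simp add: closed_closedin[symmetric])
  qed
  have "N n e = {f \<in> topspace (PT n e).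
     \<forall>(s,t,i)\<in>{(s,t,i). 0 \<le> s \<and> s \<le> t \<and> t \<le> e \<and> i < n}. f s i \<le> f t i} \<inter>
     {f \<in> topspace (PT n e). \<forall>i\<in>{..<n}. f 0 i = 0} \<inter>
     {f \<in> topspace (PT n e). \<forall>t\<in>{0..e}. (\<Sum>i<n. f t i) = t}"
    unfolding N_eq[OF assms] by blast
  then show ?thesis using c1 c2 c3 by (simp add: closedin_Int)
qed

lemma compact_Ptop:
  assumes "0 \<le> e"
  shows "compact_space (Ptop n e)"
proof -
  have "compact_space (PT n e)"
    unfolding PT_def by (simp add: compact_space_product_topology compact_cube_top)
  then show ?thesis
    unfolding Ptop_def by (intro compact_space_subtopology closedin_compact_space closedin_N assms)
qed

lemma Hausdorff_Ptop: "Hausdorff_space (Ptop n e)"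
  unfolding Ptop_def PT_def
  by (intro Hausdorff_space_subtopology) (simp add: Hausdorff_space_product_topology Hausdorff_cube_top)


lemma N_lip:
  assumes "\<gamma> \<in> N n e" "s \<in> {0..e}" "t \<in> {0..e}" "i < n"
  shows "\<bar>\<gamma> t i - \<gamma> s i\<bar> \<le> \<bar>t - s\<bar>"
proof -
  have R: "\<forall>i<n. \<forall>s t. 0 \<le> s \<longrightarrow> s \<le> t \<longrightarrow> t \<le> e \<longrightarrow> \<gamma> s i \<le> \<gamma> t i"
     "\<forall>t\<in>{0..e}. (\<Sum>i<n. \<gamma> t i) = t"
    using assms(1,2) natural_dipath_iff[of e n \<gamma>] unfolding N_def by auto
  have *: "\<gamma> b i - \<gamma> a i \<le> b - a" if ab: "a \<in> {0..e}" "b \<in> {0..e}" "a \<le> b" for a b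
  proof -
    have "\<gamma> b i - \<gamma> a i \<le> (\<Sum>j<n. \<gamma> b j - \<gamma> a j)"
      using that R \<open>i<n\<close> by (intro member_le_sum) auto
    also have "\<dots> = b - a" using R ab by (simp add: sum_subtractf)
    finally show ?thesis .
  qed
  show ?thesis
  proof (cases "s \<le> t")
    case True then show ?thesis using *[of s t] R assms by force
  next
    case False then show ?thesis using *[of t s] R assms by force
  qed
qed

lemma N_cont: "\<gamma> \<in> N n e \<Longrightarrow> continuous_map (top_of_set {0..e}) (cube_top n) \<gamma>"
  unfolding N_def natural_dipath_def by auto

lemma open_cube:
  assumes "openin (cube_top n) W" "y \<in> W"
  shows "\<exists>d>0. \<forall>z\<in>cube_set n. (\<forall>i<n. \<bar>z i - y i\<bar> < d) \<longrightarrow> z \<in> W"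
proof -
  obtain W' where W': "openin (powertop_real {..<n}) W'" "W = W' \<inter> cube_set n"
    using assms(1) unfolding cube_top_def openin_subtopology by auto
  then obtain U where U: "\<forall>i\<in>{..<n}. openin euclideanreal (U i)" "y \<in> Pi\<^sub>E {..<n} U" "Pi\<^sub>E {..<n} U \<subseteq> W'"
    using assms(2) unfolding openin_product_topology_alt by blast
  have "\<forall>i\<in>{..<n}. \<exists>r>0. ball (y i) r \<subseteq> U i"
    using U by (meson PiE_E open_contains_ball open_openin)
  then obtain r where r: "\<forall>i\<in>{..<n}. r i > 0 \<and> ball (y i) (r i) \<subseteq> U i"
    by metis
  define d where "d = Min (insert 1 (r ` {..<n}))"
  have d0: "d > 0" unfolding d_def using r by (subst Min_gr_iff) auto
  have dr: "d \<le> r i" if "i < n" for i unfolding d_def using that by (intro Min_le) auto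
  show ?thesis
  proof (intro exI conjI ballI impI)
    show "d > 0" by (rule d0)
    fix z assume z: "z \<in> cube_set n" "\<forall>i<n. \<bar>z i - y i\<bar> < d"
    have "z \<in> Pi\<^sub>E {..<n} U"
    proof (rule PiE_I)
      fix i assume i: "i \<in> {..<n}"
      then have "z i \<in> ball (y i) (r i)"
        using z dr[of i] by (auto simp: dist_real_def abs_minus_commute)
      then show "z i \<in> U i" using r i by blast
    next
      fix i assume "i \<notin> {..<n}" then show "z i = undefined"
        using z unfolding cube_set_def by (auto simp: PiE_def extensional_def)
    qed
    then show "z \<in> W" using U W' z by auto
  qed
qed

lemma key_open:
  assumes K: "compactin (top_of_set {0..e}) K" and W: "openin (cube_top n) W"
  shows "openin (Ptop n e) {f \<in> N n e. f ` K \<subseteq> W}"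
  unfolding openin_subopen[of _ "{f \<in> N n e. f ` K \<subseteq> W}"]
proof
  fix g0 assume g0: "g0 \<in> {f \<in> N n e. f ` K \<subseteq> W}"
  have Ksub: "K \<subseteq> {0..e}" and cK: "compact K"
    using K by (auto simp: compactin_subtopology)
  have "\<forall>t\<in>K. \<exists>d>0. \<forall>z\<in>cube_set n. (\<forall>i<n. \<bar>z i - g0 t i\<bar> < d) \<longrightarrow> z \<in> W"
    using g0 open_cube[OF W] by auto
  then obtain d where d: "\<forall>t\<in>K. d t > 0 \<and> (\<forall>z\<in>cube_set n. (\<forall>i<n. \<bar>z i - g0 t i\<bar> < d t) \<longrightarrow> z \<in> W)"
    by metis
  have "K \<subseteq> (\<Union>t\<in>K. ball t (d t / 2))"
    using d by force
  then obtain F where F: "F \<subseteq> K" "finite F" "K \<subseteq> (\<Union>t\<in>F. ball t (d t / 2))"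
    using compactE_image[OF cK, of K "\<lambda>t. ball t (d t / 2)"] by auto
  define V where "V = {f \<in> topspace (Ptop n e). \<forall>j\<in>F \<times> {..<n}.
     \<bar>f (fst j) (snd j) - g0 (fst j) (snd j)\<bar> < d (fst j) / 2}"
  have "openin (Ptop n e) V"
    unfolding V_def
  proof (rule openin_all)
    show "finite (F \<times> {..<n})" using F by auto
    fix j assume j: "j \<in> F \<times> {..<n}"
    let ?c = "g0 (fst j) (snd j)" and ?r = "d (fst j) / 2"
    have "continuous_map (Ptop n e) euclideanreal (\<lambda>f. f (fst j) (snd j))"
      using j F Ksub by (intro eval_cont) auto
    from openin_continuous_map_preimage[OF this, of "{?c - ?r <..< ?c + ?r}"]
    show "openin (Ptop n e) {f \<in> topspace (Ptop n e). \<bar>f (fst j) (snd j) - ?c\<bar> < ?r}"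
      by (simp only: greaterThanLessThan_iff abs_diff_less_iff open_greaterThanLessThan open_openin[symmetric] simp_thms)
  qed
  moreover have "g0 \<in> V" unfolding V_def using g0 d F by force
  moreover have "V \<subseteq> {f \<in> N n e. f ` K \<subseteq> W}"
  proof
    fix f assume f: "f \<in> V"
    then have fN: "f \<in> N n e" unfolding V_def by auto
    have "f t' \<in> W" if t': "t' \<in> K" for t'
    proof -
      obtain t where t: "t \<in> F" "t' \<in> ball t (d t / 2)" using F t' by auto
      have tK: "t \<in> K" using t F by auto
      have fc: "f t' \<in> cube_set n" using fN N_sub Ksub t' by blast
      have "\<bar>f t' i - g0 t i\<bar> < d t" if i: "i < n" for i
      proof -
        have "\<bar>f t' i - f t i\<bar> \<le> \<bar>t' - t\<bar>"
          using N_lip[OF fN, of t t' i] Ksub t' tK i by (meson subsetD)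
        also have "\<dots> < d t / 2" using t by (simp add: dist_real_def abs_minus_commute)
        finally have a: "\<bar>f t' i - f t i\<bar> < d t / 2" .
        have b: "\<bar>f t i - g0 t i\<bar> < d t / 2" using f t i unfolding V_def by auto
        show ?thesis using a b by linarith
      qed
      then show ?thesis using d tK fc by auto
    qed
    then show "f \<in> {f \<in> N n e. f ` K \<subseteq> W}" using fN by auto
  qed
  ultimately show "\<exists>T. openin (Ptop n e) T \<and> g0 \<in> T \<and> T \<subseteq> {f \<in> N n e. f ` K \<subseteq> W}"
    by blast
qed




lemma N_sub_CO: "N n e \<subseteq> topspace (compact_open (top_of_set {0..e}) (cube_top n))"
proof
  fix g assume g: "g \<in> N n e"
  let ?B = "{f \<in> topspace (top_of_set {0..e}) \<rightarrow>\<^sub>E topspace (cube_top n).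
             continuous_map (top_of_set {0..e}) (cube_top n) f \<and> f ` {} \<subseteq> cube_set n}"
  have "g \<in> ?B" using g N_sub N_cont by auto
  moreover have "?B \<in> {{f \<in> topspace (top_of_set {0..e}) \<rightarrow>\<^sub>E topspace (cube_top n).
       continuous_map (top_of_set {0..e}) (cube_top n) f \<and> f ` K \<subseteq> U} | K U.
        compactin (top_of_set {0..e}) K \<and> openin (cube_top n) U}"
  proof -
    have "compactin (top_of_set {0..e}) {}" by simp
    moreover have "openin (cube_top n) (cube_set n)" by (metis openin_topspace topspace_cube_top)
    ultimately show ?thesis
      by (intro CollectI exI[where x="{}"] exI[where x="cube_set n"] conjI refl)
  qed
  ultimately show "g \<in> topspace (compact_open (top_of_set {0..e}) (cube_top n))"
    unfolding compact_open_def topology_generated_by_topspace by (rule UnionI[rotated])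
qed

lemma topology_eq_id:
  assumes "topspace X = topspace Y" "continuous_map X Y id" "continuous_map Y X id"
  shows "X = Y"
  unfolding topology_eq
proof
  fix S
  show "openin X S \<longleftrightarrow> openin Y S"
  proof
    assume "openin X S"
    have "{x \<in> topspace Y. id x \<in> S} = S" using openin_subset[OF \<open>openin X S\<close>] assms(1) by auto
    with openin_continuous_map_preimage[OF assms(3) \<open>openin X S\<close>]
    show "openin Y S" by simp
  next
    assume "openin Y S"
    have "{x \<in> topspace X. id x \<in> S} = S" using openin_subset[OF \<open>openin Y S\<close>] assms(1) by auto
    with openin_continuous_map_preimage[OF assms(2) \<open>openin Y S\<close>]
    show "openin X S" by simp
  qed
qed

lemma T_eq:
  "subtopology (compact_open (top_of_set {0..e}) (cube_top n)) (N n e) = Ptop n e"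
proof (rule topology_eq_id)
  let ?CO = "compact_open (top_of_set {0..e}) (cube_top n)"
  have ts: "topspace (subtopology ?CO (N n e)) = N n e"
    using N_sub_CO by auto
  then show "topspace (subtopology ?CO (N n e)) = topspace (Ptop n e)" by simp
  show "continuous_map (subtopology ?CO (N n e)) (Ptop n e) id"
  proof (rule cont_into_Ptop)
    show "\<And>x. x \<in> topspace (subtopology ?CO (N n e)) \<Longrightarrow> id x \<in> N n e" using ts by simp
    fix t i assume t: "t \<in> {0..e}" and i: "i < n"
    show "continuous_map (subtopology ?CO (N n e)) euclideanreal (\<lambda>x. id x t i)"
      unfolding continuous_map_def
    proof (intro conjI allI impI)
      show "(\<lambda>x. id x t i) \<in> topspace (subtopology ?CO (N n e)) \<rightarrow> topspace euclideanreal" by simp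
      fix V :: "real set" assume V: "openin euclideanreal V"
      define Wc where "Wc = {y \<in> topspace (cube_top n). y i \<in> V}"
      have Wo: "openin (cube_top n) Wc"
        unfolding Wc_def using openin_continuous_map_preimage[OF cube_proj_cont[OF i] V] .
      define B where "B = {f \<in> topspace (top_of_set {0..e}) \<rightarrow>\<^sub>E topspace (cube_top n).
             continuous_map (top_of_set {0..e}) (cube_top n) f \<and> f ` {t} \<subseteq> Wc}"
      have "openin ?CO B"
        unfolding compact_open_def openin_topology_generated_by_iff
      proof (rule generate_topology_on.Basis)
        have "compactin (top_of_set {0..e}) {t}" using t by simp
        then show "B \<in> {{f \<in> topspace (top_of_set {0..e}) \<rightarrow>\<^sub>E topspace (cube_top n).
          continuous_map (top_of_set {0..e}) (cube_top n) f \<and> f ` K \<subseteq> U} | K U.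
          compactin (top_of_set {0..e}) K \<and> openin (cube_top n) U}"
          unfolding B_def using Wo by blast
      qed
      moreover have "{x \<in> topspace (subtopology ?CO (N n e)). id x t i \<in> V} = B \<inter> N n e"
      proof -
        have "x \<in> B" if x: "x \<in> N n e" "x t i \<in> V" for x
        proof -
          have "x \<in> {0..e} \<rightarrow>\<^sub>E cube_set n" using x N_sub by blast
          then have "x t \<in> cube_set n" using t by blast
          then show ?thesis unfolding B_def Wc_def
            using x N_cont[OF x(1)] \<open>x \<in> {0..e} \<rightarrow>\<^sub>E cube_set n\<close> by simp
        qed
        then show ?thesis unfolding ts B_def Wc_def by auto
      qed
      ultimately show "openin (subtopology ?CO (N n e)) {x \<in> topspace (subtopology ?CO (N n e)). id x t i \<in> V}"
        unfolding openin_subtopology by blast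
    qed
  qed
  show "continuous_map (Ptop n e) (subtopology ?CO (N n e)) id"
    unfolding continuous_map_in_subtopology
  proof
    show "continuous_map (Ptop n e) ?CO id"
      unfolding compact_open_def
    proof (rule continuous_on_generated_topo)
      fix U assume "U \<in> {{f \<in> topspace (top_of_set {0..e}) \<rightarrow>\<^sub>E topspace (cube_top n).
          continuous_map (top_of_set {0..e}) (cube_top n) f \<and> f ` K \<subseteq> U} | K U.
          compactin (top_of_set {0..e}) K \<and> openin (cube_top n) U}"
      then obtain K W where KW: "compactin (top_of_set {0..e}) K" "openin (cube_top n) W"
        "U = {f \<in> topspace (top_of_set {0..e}) \<rightarrow>\<^sub>E topspace (cube_top n).
          continuous_map (top_of_set {0..e}) (cube_top n) f \<and> f ` K \<subseteq> W}" by blast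
      have "id -` U \<inter> topspace (Ptop n e) = {f \<in> N n e. f ` K \<subseteq> W}"
      proof -
        have "f \<in> topspace (top_of_set {0..e}) \<rightarrow>\<^sub>E topspace (cube_top n) \<and>
          continuous_map (top_of_set {0..e}) (cube_top n) f" if "f \<in> N n e" for f
          using that N_sub N_cont by auto
        note fN = this
        show ?thesis unfolding KW(3) topspace_Ptop
        proof (rule Set.set_eqI)
          fix f show "f \<in> id -` {f \<in> topspace (top_of_set {0..e}) \<rightarrow>\<^sub>E topspace (cube_top n).
            continuous_map (top_of_set {0..e}) (cube_top n) f \<and> f ` K \<subseteq> W} \<inter> N n e \<longleftrightarrow> f \<in> {f \<in> N n e. f ` K \<subseteq> W}"
            using fN[of f] by (simp only: vimage_eq id_apply Int_iff mem_Collect_eq) blast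
        qed
      qed
      then show "openin (Ptop n e) (id -` U \<inter> topspace (Ptop n e))"
        using key_open[OF KW(1,2)] by simp
    next
      show "id ` topspace (Ptop n e) \<subseteq> \<Union> {{f \<in> topspace (top_of_set {0..e}) \<rightarrow>\<^sub>E topspace (cube_top n).
          continuous_map (top_of_set {0..e}) (cube_top n) f \<and> f ` K \<subseteq> U} | K U.
          compactin (top_of_set {0..e}) K \<and> openin (cube_top n) U}"
        using N_sub_CO[of n e] unfolding compact_open_def topology_generated_by_topspace by simp
    qed
    show "id \<in> topspace (Ptop n e) \<rightarrow> N n e" by simp
  qed
qed




lemma Rats_near:
  fixes e t r :: real
  assumes "0 < e" "t \<in> {0..e}" "0 < r"
  shows "\<exists>q\<in>{0..e} \<inter> \<rat>. \<bar>q - t\<bar> < r"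
proof (cases "t < e")
  case True
  then obtain q where "q \<in> \<rat>" "t < q" "q < min (t + r) e"
    using Rats_dense_in_real[of t "min (t+r) e"] assms by auto
  then show ?thesis using assms by (intro bexI[of _ q]) auto
next
  case False
  then have "t = e" using assms by auto
  then obtain q where "q \<in> \<rat>" "max (e - r) 0 < q" "q < e"
    using Rats_dense_in_real[of "max (e - r) 0" e] assms by auto
  then show ?thesis using assms \<open>t = e\<close> by (intro bexI[of _ q]) auto
qed

lemma inj_restrict_Rats:
  assumes "0 < e"
  shows "inj_on (\<lambda>f. restrict f ({0..e} \<inter> \<rat>)) (N n e)"
proof (rule inj_onI)
  fix f g assume f: "f \<in> N n e" and g: "g \<in> N n e"
    and eq: "restrict f ({0..e} \<inter> \<rat>) = restrict g ({0..e} \<inter> \<rat>)"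
  have fq: "f q i = g q i" if "q \<in> {0..e} \<inter> \<rat>" for q i
    using fun_cong[OF eq, of q] that by simp
  have pt: "f t i = g t i" if t: "t \<in> {0..e}" and i: "i < n" for t i
  proof (rule ccontr)
    assume ne: "f t i \<noteq> g t i"
    define r where "r = \<bar>f t i - g t i\<bar> / 2"
    have r: "r > 0" using ne by (simp add: r_def)
    obtain q where q: "q \<in> {0..e} \<inter> \<rat>" "\<bar>q - t\<bar> < r"
      using Rats_near[OF assms t r] by blast
    have "\<bar>f t i - f q i\<bar> \<le> \<bar>t - q\<bar>" using N_lip[OF f, of q t i] q t i by auto
    moreover have "\<bar>g t i - g q i\<bar> \<le> \<bar>t - q\<bar>" using N_lip[OF g, of q t i] q t i by auto
    moreover have "f q i = g q i" using fq q by auto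
    ultimately have "\<bar>f t i - g t i\<bar> \<le> 2 * \<bar>t - q\<bar>"
    proof -
      assume a: "\<bar>f t i - f q i\<bar> \<le> \<bar>t - q\<bar>" "\<bar>g t i - g q i\<bar> \<le> \<bar>t - q\<bar>" "f q i = g q i"
      have "\<bar>f t i - g t i\<bar> = \<bar>(f t i - f q i) - (g t i - g q i)\<bar>" using a(3) by simp
      also have "\<dots> \<le> \<bar>f t i - f q i\<bar> + \<bar>g t i - g q i\<bar>" by (rule abs_triangle_ineq4)
      also have "\<dots> \<le> \<bar>t - q\<bar> + \<bar>t - q\<bar>" using a(1,2) by (rule add_mono)
      finally show ?thesis by simp
    qed
    also have "\<dots> < 2 * r" using q by (simp add: abs_minus_commute)
    finally show False unfolding r_def by simp
  qed
  show "f = g"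
  proof (rule PiE_ext)
    show "f \<in> {0..e} \<rightarrow>\<^sub>E cube_set n" "g \<in> {0..e} \<rightarrow>\<^sub>E cube_set n" using f g N_sub by auto
    fix t assume t: "t \<in> {0..e}"
    show "f t = g t"
    proof (rule PiE_ext)
      show "f t \<in> Pi\<^sub>E {..<n} (\<lambda>_. {0..1})" "g t \<in> Pi\<^sub>E {..<n} (\<lambda>_. {0..1})"
        using f g N_sub t unfolding cube_set_def by blast+
      show "\<And>i. i \<in> {..<n} \<Longrightarrow> f t i = g t i" using pt t by auto
    qed
  qed
qed

lemma metrizable_Ptop:
  assumes "0 < e"
  shows "metrizable_space (Ptop n e)"
proof -
  define R where "R = {0..e} \<inter> \<rat>"
  define Q where "Q = product_topology (\<lambda>_. cube_top n) R"
  define \<Phi> where "\<Phi> = (\<lambda>f::real\<Rightarrow>nat\<Rightarrow>real. restrict f R)"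
  have cont: "continuous_map (Ptop n e) Q \<Phi>"
    unfolding Q_def continuous_map_componentwise
  proof
    show "\<Phi> ` topspace (Ptop n e) \<subseteq> extensional R" unfolding \<Phi>_def by auto
    show "\<forall>k\<in>R. continuous_map (Ptop n e) (cube_top n) (\<lambda>x. \<Phi> x k)"
    proof
      fix k assume k: "k \<in> R"
      have "continuous_map (Ptop n e) (cube_top n) (\<lambda>x. x k)"
        unfolding Ptop_def PT_def using k unfolding R_def
        by (intro continuous_map_from_subtopology continuous_map_product_projection) auto
      then show "continuous_map (Ptop n e) (cube_top n) (\<lambda>x. \<Phi> x k)"
        unfolding \<Phi>_def using k by simp
    qed
  qed
  have haus: "Hausdorff_space Q"
    unfolding Q_def by (simp add: Hausdorff_space_product_topology Hausdorff_cube_top)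
  have inj: "inj_on \<Phi> (topspace (Ptop n e))"
    unfolding \<Phi>_def R_def using inj_restrict_Rats[OF assms] by simp
  have emb: "embedding_map (Ptop n e) Q \<Phi>"
    using continuous_imp_embedding_map[OF cont compact_Ptop haus inj] assms by simp
  then have hom: "Ptop n e homeomorphic_space subtopology Q (\<Phi> ` topspace (Ptop n e))"
    unfolding embedding_map_def using homeomorphic_map_imp_homeomorphic_space by blast
  have "countable R" unfolding R_def by (rule countable_subset[OF Int_lower2 countable_rat])
  then have "metrizable_space Q"
    unfolding Q_def metrizable_space_product_topology
    by (auto intro: countable_subset simp: metrizable_cube_top)
  then show ?thesis
    using hom homeomorphic_metrizable_space metrizable_space_subtopology by blast
qed

lemma seqcompact_Ptop:
  assumes "0 < e"
  shows "sequentially_compact_top (Ptop n e)"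
proof -
  obtain M d where Md: "Metric_space M d" "Ptop n e = Metric_space.mtopology M d"
    using metrizable_Ptop[OF assms] unfolding metrizable_space_def by blast
  have "compact_space (Metric_space.mtopology M d)"
    using compact_Ptop[of e n] assms Md by simp
  then have "\<forall>\<sigma>::nat\<Rightarrow>_. range \<sigma> \<subseteq> M
         \<longrightarrow> (\<exists>l r. l \<in> M \<and> strict_mono r \<and> limitin (Metric_space.mtopology M d) (\<sigma> \<circ> r) l sequentially)"
    using Metric_space.compact_space_sequentially[OF Md(1)] by blast
  moreover have "topspace (Ptop n e) = M" using Md Metric_space.topspace_mtopology by metis
  ultimately show ?thesis unfolding sequentially_compact_top_def using Md by metis
qed

lemma delta_hausdorff_Ptop: "delta_hausdorff (Ptop n e)"
  unfolding delta_hausdorff_def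
proof (intro allI impI)
  fix m and f :: "(nat \<Rightarrow> real) \<Rightarrow> real \<Rightarrow> nat \<Rightarrow> real"
  assume f: "continuous_map (simplex_top m) (Ptop n e) f"
  have "compactin (simplex_top m) (standard_simplex m)"
    unfolding simplex_top_def compactin_subtopology using compactin_standard_simplex by blast
  from image_compactin[OF this f]
  show "closedin (Ptop n e) (f ` standard_simplex m)"
    using compactin_imp_closedin Hausdorff_Ptop by blast
qed

definition cc :: "nat \<Rightarrow> real \<Rightarrow> real \<Rightarrow> (real \<Rightarrow> nat \<Rightarrow> real) \<Rightarrow> (real \<Rightarrow> nat \<Rightarrow> real) \<Rightarrow> (real \<Rightarrow> nat \<Rightarrow> real)" where
  "cc n e s f g = (\<lambda>t\<in>{0..e}. \<lambda>i\<in>{..<n}. (1 - s) * f t i + s * g t i)"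

lemma cc_N:
  assumes "0 \<le> e" "f \<in> N n e" "g \<in> N n e" "0 \<le> s" "s \<le> 1"
  shows "cc n e s f g \<in> N n e"
proof -
  have F: "f \<in> {0..e} \<rightarrow>\<^sub>E cube_set n \<and>
     (\<forall>i<n. \<forall>s t. 0 \<le> s \<longrightarrow> s \<le> t \<longrightarrow> t \<le> e \<longrightarrow> f s i \<le> f t i) \<and>
     (\<forall>i<n. f 0 i = 0) \<and> (\<forall>t\<in>{0..e}. (\<Sum>i<n. f t i) = t)"
    using assms(2) unfolding N_def mem_Collect_eq natural_dipath_iff[OF assms(1)] by assumption
  have G: "g \<in> {0..e} \<rightarrow>\<^sub>E cube_set n \<and>
     (\<forall>i<n. \<forall>s t. 0 \<le> s \<longrightarrow> s \<le> t \<longrightarrow> t \<le> e \<longrightarrow> g s i \<le> g t i) \<and>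
     (\<forall>i<n. g 0 i = 0) \<and> (\<forall>t\<in>{0..e}. (\<Sum>i<n. g t i) = t)"
    using assms(3) unfolding N_def mem_Collect_eq natural_dipath_iff[OF assms(1)] by assumption
  have fv: "0 \<le> f t i \<and> f t i \<le> 1" "0 \<le> g t i \<and> g t i \<le> 1" if "t \<in> {0..e}" "i < n" for t i
  proof -
    have "f t \<in> cube_set n" "g t \<in> cube_set n" using F G that(1) by (meson PiE_mem)+
    then show "0 \<le> f t i \<and> f t i \<le> 1" "0 \<le> g t i \<and> g t i \<le> 1"
      unfolding cube_set_def using that(2) by (meson PiE_mem atLeastAtMost_iff lessThan_iff)+
  qed
  have conv: "0 \<le> (1 - s) * a + s * b \<and> (1 - s) * a + s * b \<le> 1"
    if "0 \<le> a" "a \<le> 1" "0 \<le> b" "b \<le> 1" for a b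
  proof -
    have "0 \<le> (1 - s) * a" "0 \<le> s * b" using that assms by auto
    moreover have "(1 - s) * a \<le> (1 - s)" "s * b \<le> s" using that assms
      by (auto simp: mult_left_le)
    ultimately show ?thesis by linarith
  qed
  have "cc n e s f g \<in> {0..e} \<rightarrow>\<^sub>E cube_set n"
    unfolding cc_def cube_set_def using fv conv by (simp add: restrict_PiE_iff)
  moreover have "\<forall>i<n. \<forall>a b. 0 \<le> a \<longrightarrow> a \<le> b \<longrightarrow> b \<le> e \<longrightarrow> cc n e s f g a i \<le> cc n e s f g b i"
  proof (intro allI impI)
    fix i a b assume "i < n" "0 \<le> a" "a \<le> b" "b \<le> e"
    then have "f a i \<le> f b i" "g a i \<le> g b i" using F G by auto
    then have "(1 - s) * f a i + s * g a i \<le> (1 - s) * f b i + s * g b i"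
      using assms by (intro add_mono mult_left_mono) auto
    then show "cc n e s f g a i \<le> cc n e s f g b i"
      unfolding cc_def using \<open>i < n\<close> \<open>0 \<le> a\<close> \<open>a \<le> b\<close> \<open>b \<le> e\<close> by simp
  qed
  moreover have "\<forall>i<n. cc n e s f g 0 i = 0"
    unfolding cc_def using F G assms by simp
  moreover have "\<forall>t\<in>{0..e}. (\<Sum>i<n. cc n e s f g t i) = t"
  proof
    fix t assume t: "t \<in> {0..e}"
    have "(\<Sum>i<n. cc n e s f g t i) = (\<Sum>i<n. (1 - s) * f t i + s * g t i)"
      unfolding cc_def using t by (intro sum.cong) auto
    also have "\<dots> = (1 - s) * (\<Sum>i<n. f t i) + s * (\<Sum>i<n. g t i)"
      by (simp add: sum.distrib sum_distrib_left)
    also have "\<dots> = t" using F G t by (simp add: algebra_simps)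
    finally show "(\<Sum>i<n. cc n e s f g t i) = t" .
  qed
  ultimately show ?thesis
    unfolding N_def mem_Collect_eq natural_dipath_iff[OF assms(1)] by (intro conjI)
qed

lemma cc_cont:
  assumes "0 \<le> e" "g \<in> N n e"
  shows "continuous_map (prod_topology (top_of_set {0..1}) (Ptop n e)) (Ptop n e) (\<lambda>x. cc n e (fst x) (snd x) g)"
proof (rule cont_into_Ptop)
  fix x assume "x \<in> topspace (prod_topology (top_of_set {0..1::real}) (Ptop n e))"
  then show "cc n e (fst x) (snd x) g \<in> N n e"
    using cc_N assms by auto
next
  fix t i assume t: "t \<in> {0..e}" and i: "i < n"
  have eq: "(\<lambda>x. cc n e (fst x) (snd x) g t i) = (\<lambda>x. (1 - fst x) * snd x t i + fst x * g t i)"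
    unfolding cc_def using t i by (simp add: fun_eq_iff)
  have f1: "continuous_map (prod_topology (top_of_set {0..1::real}) (Ptop n e)) euclideanreal fst"
    using continuous_map_fst[of "top_of_set {0..1::real}" "Ptop n e"]
    unfolding continuous_map_in_subtopology by blast
  have f2: "continuous_map (prod_topology (top_of_set {0..1::real}) (Ptop n e)) euclideanreal (\<lambda>x. snd x t i)"
    using continuous_map_compose[OF continuous_map_snd eval_cont[OF t i]] by (simp add: o_def)
  show "continuous_map (prod_topology (top_of_set {0..1}) (Ptop n e)) euclideanreal (\<lambda>x. cc n e (fst x) (snd x) g t i)"
    unfolding eq using f1 f2
    by (intro continuous_map_add continuous_map_real_mult continuous_map_diff continuous_map_const[THEN iffD2]) auto
qed

definition g0 :: "nat \<Rightarrow> real \<Rightarrow> real \<Rightarrow> nat \<Rightarrow> real" where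
  "g0 n e = (\<lambda>t\<in>{0..e}. \<lambda>i\<in>{..<n}. if i = 0 then t else 0)"

lemma g0_N:
  assumes "0 \<le> e" "e \<le> 1" "1 \<le> n"
  shows "g0 n e \<in> N n e"
proof -
  have "g0 n e \<in> {0..e} \<rightarrow>\<^sub>E cube_set n"
    unfolding g0_def cube_set_def using assms by (auto simp: PiE_iff)
  moreover have "(\<Sum>i<n. g0 n e t i) = t" if "t \<in> {0..e}" for t
  proof -
    have "(\<Sum>i<n. g0 n e t i) = (\<Sum>i<n. if i = 0 then t else 0)"
      unfolding g0_def using that by (intro sum.cong) auto
    also have "\<dots> = t" using assms by (simp add: sum.delta)
    finally show ?thesis .
  qed
  ultimately show ?thesis
    unfolding N_def natural_dipath_iff[OF assms(1)] unfolding g0_def using assms by auto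
qed

lemma contractible_Ptop:
  assumes "0 \<le> e" "e \<le> 1" "1 \<le> n"
  shows "contractible_space (Ptop n e)"
  unfolding contractible_space_def
proof (intro exI)
  have gN: "g0 n e \<in> N n e" using g0_N assms by blast
  show "homotopic_with (\<lambda>x. True) (Ptop n e) (Ptop n e) id (\<lambda>x. g0 n e)"
    unfolding homotopic_with[where P="\<lambda>x. True", simplified]
  proof (intro exI conjI ballI)
    show "continuous_map (prod_topology (top_of_set {0..1}) (Ptop n e)) (Ptop n e) (\<lambda>x. cc n e (fst x) (snd x) (g0 n e))"
      using cc_cont[OF assms(1) gN] .
    fix x assume x: "x \<in> topspace (Ptop n e)"
    then have xN: "x \<in> {0..e} \<rightarrow>\<^sub>E cube_set n" using N_sub by auto
    show "cc n e (fst (0, x)) (snd (0, x)) (g0 n e) = id x"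
    proof -
      have "cc n e 0 x (g0 n e) = x"
      proof (rule PiE_ext[OF _ xN])
        show "cc n e 0 x (g0 n e) \<in> {0..e} \<rightarrow>\<^sub>E cube_set n" using subsetD[OF N_sub cc_N[OF assms(1) _ gN, of x 0]] x by simp
        fix t assume t: "t \<in> {0..e}"
        have "x t \<in> Pi\<^sub>E {..<n} (\<lambda>_. {0..1})" using xN t unfolding cube_set_def by blast
        then show "cc n e 0 x (g0 n e) t = x t"
          unfolding cc_def using t by (auto simp: fun_eq_iff PiE_iff extensional_def)
      qed
      then show ?thesis by simp
    qed
    show "cc n e (fst (1, x)) (snd (1, x)) (g0 n e) = g0 n e"
      unfolding cc_def g0_def by (simp add: fun_eq_iff)
  qed
qed




definition interp :: "(int \<Rightarrow> real) \<Rightarrow> real \<Rightarrow> real" where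
  "interp A v = (1 - frac v) * A \<lfloor>v\<rfloor> + frac v * A (\<lfloor>v\<rfloor> + 1)"

lemma interp_eq:
  fixes k :: int and v :: real
  assumes "k \<le> v" "v \<le> k + 1"
  shows "interp A v = A k + (v - k) * (A (k+1) - A k)"
proof (cases "v < k + 1")
  case True
  then have fl: "\<lfloor>v\<rfloor> = k" using assms by (simp add: floor_eq_iff)
  have fr: "frac v = v - k" using fl by (simp add: frac_def)
  show ?thesis unfolding interp_def fl fr by (simp add: algebra_simps)
next
  case False
  then have v: "v = of_int (k + 1)" using assms by simp
  then have fl: "\<lfloor>v\<rfloor> = k + 1" by simp
  have "frac v = 0" using v by (simp add: frac_def)
  then show ?thesis unfolding interp_def fl using v by (simp add: algebra_simps)
qed

lemma interp_cont: "isCont (interp A) u0"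
  unfolding continuous_at_split
proof
  define k where "k = \<lfloor>u0\<rfloor>"
  have k: "k \<le> u0" "u0 < k + 1" unfolding k_def by linarith+
  define L where "L = (\<lambda>v::real. A k + (v - k) * (A (k+1) - A k))"
  have "continuous (at_right u0) L" unfolding L_def by (intro continuous_intros)
  then have "(L \<longlongrightarrow> L u0) (at_right u0)" by (simp add: continuous_within)
  moreover have "eventually (\<lambda>v. L v = interp A v) (at_right u0)"
    unfolding eventually_at_right_field
    using k by (intro exI[of _ "real_of_int k + 1"]) (auto simp: L_def intro!: interp_eq[symmetric])
  moreover have "L u0 = interp A u0" using k by (simp add: L_def interp_eq)
  ultimately have "(interp A \<longlongrightarrow> interp A u0) (at_right u0)"
    using tendsto_cong by fastforce
  then show "continuous (at_right u0) (interp A)" by (simp add: continuous_within)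
next
  define k where "k = \<lceil>u0\<rceil> - 1"
  have k: "k < u0" "u0 \<le> k + 1" unfolding k_def by linarith+
  define L where "L = (\<lambda>v::real. A k + (v - k) * (A (k+1) - A k))"
  have "continuous (at_left u0) L" unfolding L_def by (intro continuous_intros)
  then have "(L \<longlongrightarrow> L u0) (at_left u0)" by (simp add: continuous_within)
  moreover have "eventually (\<lambda>v. L v = interp A v) (at_left u0)"
    unfolding eventually_at_left_field
    using k by (intro exI[of _ "real_of_int k"]) (auto simp: L_def intro!: interp_eq[symmetric])
  moreover have "L u0 = interp A u0" using k by (simp add: L_def interp_eq[of k u0])
  ultimately have "(interp A \<longlongrightarrow> interp A u0) (at_left u0)"
    using tendsto_cong by fastforce
  then show "continuous (at_left u0) (interp A)" by (simp add: continuous_within)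
qed

lemma interp_lim:
  assumes "b \<longlonglongrightarrow> a"
  shows "((\<lambda>s. interp (\<lambda>k. b (nat k)) (1 / s)) \<longlongrightarrow> a) (at_right 0)"
  unfolding tendsto_iff
proof (intro allI impI)
  fix \<epsilon> :: real assume "\<epsilon> > 0"
  then obtain K where K: "\<And>k. k \<ge> K \<Longrightarrow> \<bar>b k - a\<bar> < \<epsilon>"
    using assms unfolding LIMSEQ_iff by (auto simp: real_norm_def)
  show "eventually (\<lambda>s. dist (interp (\<lambda>k. b (nat k)) (1 / s)) a < \<epsilon>) (at_right 0)"
    unfolding eventually_at_right_field
  proof (intro exI[of _ "1 / (real K + 1)"] conjI allI impI)
    show "0 < 1 / (real K + 1)" by simp
    fix s :: real assume s: "0 < s" "s < 1 / (real K + 1)"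
    define v where "v = 1 / s"
    have "real K + 1 < v" unfolding v_def using s by (simp add: field_simps)
    then have fl: "int K + 1 \<le> \<lfloor>v\<rfloor>" by linarith
    then have n1: "nat \<lfloor>v\<rfloor> \<ge> K" "nat (\<lfloor>v\<rfloor> + 1) \<ge> K" by linarith+
    define l where "l = frac v"
    have l: "0 \<le> l" "l < 1" unfolding l_def by (auto simp: frac_lt_1)
    define x where "x = b (nat \<lfloor>v\<rfloor>) - a"
    define y where "y = b (nat (\<lfloor>v\<rfloor> + 1)) - a"
    have x: "\<bar>x\<bar> < \<epsilon>" and y: "\<bar>y\<bar> < \<epsilon>" unfolding x_def y_def using K n1 by auto
    have "interp (\<lambda>k. b (nat k)) v - a = (1 - l) * x + l * y"
      unfolding interp_def l_def x_def y_def by (simp add: algebra_simps)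
    moreover have "\<bar>(1 - l) * x + l * y\<bar> < \<epsilon>"
    proof -
      have "\<bar>(1 - l) * x + l * y\<bar> \<le> (1 - l) * \<bar>x\<bar> + l * \<bar>y\<bar>"
        using l by (metis abs_mult abs_of_nonneg abs_triangle_ineq diff_ge_0_iff_ge less_eq_real_def)
      also have "\<dots> < (1 - l) * \<epsilon> + l * \<epsilon>"
        using l x y by (intro add_less_le_mono mult_strict_left_mono mult_left_mono) auto
      finally show ?thesis by (simp add: algebra_simps)
    qed
    ultimately show "dist (interp (\<lambda>k. b (nat k)) (1 / s)) a < \<epsilon>"
      unfolding v_def dist_real_def by simp
  qed
qed




lemma topspace_simplex_top[simp]: "topspace (simplex_top m) = standard_simplex m"
  unfolding simplex_top_def by simp

lemma cc0:
  assumes "f \<in> N n e"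
  shows "cc n e 0 f g = f"
proof (rule ext)
  have xN: "f \<in> {0..e} \<rightarrow>\<^sub>E cube_set n" using assms N_sub by blast
  fix t show "cc n e 0 f g t = f t"
  proof (cases "t \<in> {0..e}")
    case True
    have "f t \<in> Pi\<^sub>E {..<n} (\<lambda>_. {0..1})" using xN True unfolding cube_set_def by blast
    then have "f t \<in> extensional {..<n}" by (simp add: PiE_def)
    then show ?thesis unfolding cc_def using True by (simp add: extensional_restrict)
  next
    case False
    then show ?thesis unfolding cc_def using PiE_arb[OF xN False] False by auto
  qed
qed

lemma proj0_cont: "continuous_map (simplex_top 1) (top_of_set {0..1}) (\<lambda>y. y 0)"
  unfolding continuous_map_in_subtopology
proof
  show "continuous_map (simplex_top 1) euclideanreal (\<lambda>y. y 0)"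
    unfolding simplex_top_def
    by (intro continuous_map_from_subtopology continuous_map_product_projection) auto
  show "(\<lambda>y. y 0) \<in> topspace (simplex_top 1) \<rightarrow> {0..1}"
    by (auto simp: standard_simplex_def)
qed

lemma path_component_cont:
  fixes b :: "nat \<Rightarrow> real"
  assumes "b \<longlonglongrightarrow> a"
  shows "continuous_on {0..1} (\<lambda>s. if s \<le> 0 then a else interp (\<lambda>k. b (nat k)) (1 / s))"
  (is "continuous_on _ ?Q")
  unfolding continuous_on_eq_continuous_within
proof
  fix s :: real assume s: "s \<in> {0..1}"
  show "continuous (at s within {0..1}) ?Q"
  proof (cases "s = 0")
    case True
    have "((\<lambda>s. interp (\<lambda>k. b (nat k)) (1 / s)) \<longlongrightarrow> a) (at_right 0)"
      using interp_lim[OF assms] .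
    moreover have "eventually (\<lambda>s. interp (\<lambda>k. b (nat k)) (1 / s) = ?Q s) (at_right 0)"
      unfolding eventually_at_right_field by (intro exI[of _ 1]) auto
    ultimately have "(?Q \<longlongrightarrow> a) (at_right 0)" using tendsto_cong by fastforce
    then show ?thesis
      using True by (simp add: continuous_within at_within_Icc_at_right)
  next
    case False
    then have s0: "s > 0" using s by auto
    have "isCont (interp (\<lambda>k. b (nat k)) \<circ> (\<lambda>s. 1 / s)) s"
      using s0 by (intro continuous_at_compose interp_cont continuous_intros) auto
    then have "continuous (at s within {0..1}) (\<lambda>s. interp (\<lambda>k. b (nat k)) (1 / s))"
      by (simp add: o_def continuous_at_imp_continuous_within)
    then show ?thesis
      by (rule continuous_transform_within[OF _ s0 s]) (auto simp: dist_real_def)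
  qed
qed

lemma delta_generated_Ptop:
  assumes e: "0 < e"
  shows "delta_generated (Ptop n e)"
  unfolding delta_generated_def
proof (intro allI impI iffI)
  fix U m f
  assume "openin (Ptop n e) U" "continuous_map (simplex_top m) (Ptop n e) f"
  from openin_continuous_map_preimage[OF this(2,1)]
  show "openin (simplex_top m) {x \<in> standard_simplex m. f x \<in> U}" by simp
next
  fix U assume Usub: "U \<subseteq> topspace (Ptop n e)"
    and H: "\<forall>m f. continuous_map (simplex_top m) (Ptop n e) f \<longrightarrow>
                 openin (simplex_top m) {x \<in> standard_simplex m. f x \<in> U}"
  show "openin (Ptop n e) U"
  proof (rule ccontr)
    assume nopen: "\<not> openin (Ptop n e) U"
    obtain M d where Md: "Metric_space M d" "Ptop n e = Metric_space.mtopology M d"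
      using metrizable_Ptop[OF e] unfolding metrizable_space_def by blast
    interpret Md: Metric_space M d by (rule Md(1))
    have MN: "M = N n e" using Md(2) Md.topspace_mtopology by (metis topspace_Ptop)
    obtain x where xU: "x \<in> U" and x: "\<forall>r>0. \<not> Md.mball x r \<subseteq> U"
      using nopen Usub unfolding Md(2) Md.openin_mtopology Md.topspace_mtopology by blast
    have "\<forall>k::nat. \<exists>y. y \<in> Md.mball x (1 / (real k + 1)) \<and> y \<notin> U"
    proof
      fix k :: nat
      have "\<not> Md.mball x (1 / (real k + 1)) \<subseteq> U" using x by simp
      then show "\<exists>y. y \<in> Md.mball x (1 / (real k + 1)) \<and> y \<notin> U" by blast
    qed
    then obtain \<sigma> where \<sigma>: "\<And>k. \<sigma> k \<in> Md.mball x (1 / (real k + 1))" "\<And>k. \<sigma> k \<notin> U"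
      by metis
    have \<sigma>N: "\<sigma> k \<in> N n e" for k
    proof -
      have "\<sigma> k \<in> M" using \<sigma>(1)[of k] by (simp add: Md.in_mball)
      then show ?thesis using MN by simp
    qed
    have xN: "x \<in> N n e" using xU Usub by auto
    have lim: "limitin (Ptop n e) \<sigma> x sequentially"
      unfolding Md(2) Md.limitin_metric
    proof (intro conjI allI impI)
      show "x \<in> M" using xN MN by simp
      fix \<epsilon> :: real assume "\<epsilon> > 0"
      then obtain K where K: "K > 0" "inverse (real K) < \<epsilon>"
        using ex_inverse_of_nat_less by blast
      show "\<forall>\<^sub>F k in sequentially. \<sigma> k \<in> M \<and> d (\<sigma> k) x < \<epsilon>"
        unfolding eventually_sequentially
      proof (intro exI allI impI)
        fix k assume "K \<le> k"
        have "d x (\<sigma> k) < 1 / (real k + 1)" using \<sigma>(1)[of k] by (simp add: Md.mball_def)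
        also have "\<dots> \<le> inverse (real K)" using \<open>K \<le> k\<close> K by (simp add: field_simps)
        finally show "\<sigma> k \<in> M \<and> d (\<sigma> k) x < \<epsilon>"
          using K \<sigma>N MN Md.commute by auto
      qed
    qed
    have comp: "(\<lambda>k. \<sigma> k t i) \<longlonglongrightarrow> x t i" if t: "t \<in> {0..e}" and i: "i < n" for t i
      using continuous_map_limit[OF eval_cont[OF t i] lim] by (simp add: o_def)
    define q where "q = (\<lambda>s. if s \<le> 0 then x else
        cc n e (frac (1 / s)) (\<sigma> (nat \<lfloor>1 / s\<rfloor>)) (\<sigma> (nat (\<lfloor>1 / s\<rfloor> + 1))))"
    define F where "F = (\<lambda>y::nat\<Rightarrow>real. q (y 0))"
    have qN: "q s \<in> N n e" for s
    proof (cases "s \<le> 0")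
      case True then show ?thesis using xN by (simp add: q_def)
    next
      case False
      have "0 \<le> frac (1/s)" "frac (1/s) \<le> 1" by (auto simp: frac_lt_1 less_imp_le)
      then show ?thesis using False \<sigma>N cc_N e by (simp add: q_def)
    qed
    have Fcont: "continuous_map (simplex_top 1) (Ptop n e) F"
    proof (rule cont_into_Ptop)
      show "F y \<in> N n e" for y unfolding F_def using qN .
      fix t i assume t: "t \<in> {0..e}" and i: "i < n"
      have eq: "(\<lambda>s. q s t i) = (\<lambda>s. if s \<le> 0 then x t i else interp (\<lambda>k. \<sigma> (nat k) t i) (1 / s))"
        unfolding q_def cc_def interp_def using t i by (auto simp: fun_eq_iff)
      have "continuous_on {0..1} (\<lambda>s. q s t i)"
        unfolding eq by (rule path_component_cont[OF comp[OF t i]])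
      then have "continuous_map (top_of_set {0..1}) euclideanreal (\<lambda>s. q s t i)" by simp
      from continuous_map_compose[OF proj0_cont this]
      show "continuous_map (simplex_top 1) euclideanreal (\<lambda>y. F y t i)"
        by (simp add: F_def o_def)
    qed
    define W where "W = {y \<in> standard_simplex 1. F y \<in> U}"
    have Wo: "openin (simplex_top 1) W" unfolding W_def using H Fcont by blast
    define einf where "einf = (\<lambda>j::nat. if j = 1 then (1::real) else 0)"
    define em where "em = (\<lambda>m::nat. \<lambda>j::nat. if j = 0 then inverse (real (Suc m))
                                else if j = 1 then 1 - inverse (real (Suc m)) else 0)"
    have einf_std: "einf \<in> standard_simplex 1"
      unfolding einf_def standard_simplex_def by simp
    have em_std: "em m \<in> standard_simplex 1" for m
    proof -
      have "inverse (real (Suc m)) \<le> 1" by (simp add: field_simps)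
      then show ?thesis unfolding em_def standard_simplex_def by auto
    qed
    have "einf \<in> W" unfolding W_def F_def q_def einf_def using xU einf_std einf_def by simp
    have limE: "limitin (simplex_top 1) em einf sequentially"
      unfolding simplex_top_def limitin_subtopology limitin_componentwise
    proof (intro conjI ballI)
      show "einf \<in> standard_simplex 1" by (rule einf_std)
      show "\<forall>\<^sub>F x in sequentially. em x \<in> standard_simplex 1" using em_std by simp
      show "einf \<in> extensional UNIV" by simp
      show "\<forall>\<^sub>F x in sequentially. em x \<in> topspace (powertop_real UNIV)" by simp
      fix j :: nat
      have l0: "(\<lambda>m. inverse (real (Suc m))) \<longlonglongrightarrow> 0" by (rule LIMSEQ_inverse_real_of_nat)
      have l1: "(\<lambda>m. 1 - inverse (real (Suc m))) \<longlonglongrightarrow> 1"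
        using tendsto_diff[OF tendsto_const[of "1::real"] l0] by simp
      show "limitin euclideanreal (\<lambda>c. em c j) (einf j) sequentially"
      proof (cases "j = 0")
        case True then show ?thesis using l0 by (simp add: em_def einf_def)
      next
        case False then show ?thesis using l1 by (cases "j = 1") (simp_all add: em_def einf_def)
      qed
    qed
    then have "eventually (\<lambda>m. em m \<in> W) sequentially"
      using Wo \<open>einf \<in> W\<close> unfolding limitin_def by blast
    then obtain m where "em m \<in> W" by (meson eventually_sequentially order_refl)
    then have "F (em m) \<in> U" unfolding W_def by simp
    moreover have "F (em m) = \<sigma> (Suc m)"
    proof -
      have s: "em m 0 = inverse (real (Suc m))" unfolding em_def by simp
      have a1: "frac (1 + real m) = 0"
        using frac_eq_0_iff[of "1 + real m"] by (metis Ints_1 Ints_add Ints_of_nat)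
      have a2: "nat (1 + int m) = Suc m" "nat (2 + int m) = Suc (Suc m)" by simp_all
      have "F (em m) = cc n e 0 (\<sigma> (Suc m)) (\<sigma> (Suc (Suc m)))"
        unfolding F_def q_def s by (simp add: a1 a2 divide_inverse)
      then show ?thesis using cc0[OF \<sigma>N] by simp
    qed
    ultimately show False using \<sigma>(2) by simp
  qed
qed

theorem proposition4p7:
  fixes \<epsilon> :: real
  assumes "0 < \<epsilon>" and "\<epsilon> < 1"
  shows "N 0 \<epsilon> = {} \<and>
    (\<forall>n\<ge>1. let T = subtopology (compact_open (top_of_set {0..\<epsilon>}) (cube_top n)) (N n \<epsilon>) in
       delta_generated T \<and> delta_hausdorff T \<and> metrizable_space T \<and> contractible_space T \<and>
       compact_space T \<and> Hausdorff_space T \<and> sequentially_compact_top T)"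
proof
  show "N 0 \<epsilon> = {}"
  proof (rule ccontr)
    assume "N 0 \<epsilon> \<noteq> {}"
    then obtain \<gamma> where "\<gamma> \<in> N 0 \<epsilon>" by blast
    then have "(\<Sum>i<(0::nat). \<gamma> \<epsilon> i) = \<epsilon>"
      unfolding N_def natural_dipath_def using assms by auto
    then show False using assms by simp
  qed
  show "\<forall>n\<ge>1. let T = subtopology (compact_open (top_of_set {0..\<epsilon>}) (cube_top n)) (N n \<epsilon>) in
       delta_generated T \<and> delta_hausdorff T \<and> metrizable_space T \<and> contractible_space T \<and>
       compact_space T \<and> Hausdorff_space T \<and> sequentially_compact_top T"
  proof (intro allI impI)
    fix n :: nat assume n: "n \<ge> 1"
    show "let T = subtopology (compact_open (top_of_set {0..\<epsilon>}) (cube_top n)) (N n \<epsilon>) in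
       delta_generated T \<and> delta_hausdorff T \<and> metrizable_space T \<and> contractible_space T \<and>
       compact_space T \<and> Hausdorff_space T \<and> sequentially_compact_top T"
      unfolding Let_def T_eq
      using delta_generated_Ptop[OF assms(1)] delta_hausdorff_Ptop metrizable_Ptop[OF assms(1)]
        contractible_Ptop[of \<epsilon> n] compact_Ptop[of \<epsilon> n] Hausdorff_Ptop seqcompact_Ptop[OF assms(1)]
        assms n by simp
  qed
qed


end
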